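(* Let $p,q\ge 0$ be integers, $n=p+q\ge 1$, and let $\mathcal{C}\ell(p,q)$ be the complex Clifford algebra with identity $e$ and generators $e^1,\dots,e^n$ satisfying $e^ae^b+e^be^a=2\eta^{ab}e$. For $U\in\mathcal{C}\ell(p,q)$ let $F(U)=e^aUe_a$ (summation over $a=1,\dots,n$, with $e_a=\eta_{ab}e^b$), $F^0(U)=U$, $F^{l+1}(U)=F(F^l(U))$, and let $\lambda_k=(-1)^k(n-2k)$, $k=0,\dots,n$. (i) If $n$ is even, then the $(n+1)\times(n+1)$ matrix $A=(a_{kl})_{k,l=0}^{n}$ with $a_{kl}=(\lambda_l)^k$ is invertible, and, writing $B=(b_{kl})_{k,l=0}^n=A^{-1}$, for every $U\in\mathcal{C}\ell(p,q)$ and every $k=0,\dots,n$, $$\pi_k(U)=\sum_{l=0}^n b_{kl}F^l(U).$$ (ii) If $n$ is odd, then the $\frac{n+1}{2}\times\frac{n+1}{2}$ matrix $D=(d_{kl})_{k,l=0}^{(n-1)/2}$ with $d_{kl}=(\lambda_l)^k$ is invertible, and, writing $G=(g_{kl})=D^{-1}$, for every $U\in\mathcal{C}\ell(p,q)$ and every $k=0,\dots,\frac{n-1}{2}$, $$\pi_k(U)+\pi_{n-k}(U)=\sum_{l=0}^{(n-1)/2} g_{kl}F^l(U).$$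
   Context: $\eta=(\eta^{ab})=(\eta_{ab})=\mathrm{diag}(1,\dots,1,-1,\dots,-1)$ with $p$ entries $1$ and $q$ entries $-1$. $\mathcal{C}\ell(p,q)$ is the associative unital complex algebra of dimension $2^n$ with basis $e$ and $e^{a_1\dots a_k}=e^{a_1}\cdots e^{a_k}$ for $1\le a_1<\dots<a_k\le n$, $k=1,\dots,n$. For $k=0,\dots,n$, $\mathcal{C}\ell_k(p,q)$ is the span of the basis elements $e^{a_1\dots a_k}$ with exactly $k$ indices ($\mathcal{C}\ell_0=\mathbb{C}e$), and $\pi_k:\mathcal{C}\ell(p,q)\to\mathcal{C}\ell_k(p,q)$ is the projection with respect to the direct sum decomposition $\mathcal{C}\ell(p,q)=\bigoplus_{k=0}^n\mathcal{C}\ell_k(p,q)$. *)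

theory Defs
  imports Complex_Main
begin

definition eta :: "nat \<Rightarrow> nat \<Rightarrow> nat \<Rightarrow> complex" where
  "eta p a b = (if a = b then (if a \<le> p then 1 else -1) else 0)"

definition blade :: "(nat \<Rightarrow> 'a::ring_1) \<Rightarrow> nat set \<Rightarrow> 'a" where
  "blade gen A = prod_list (map gen (sorted_list_of_set A))"

text \<open>The associative unital complex algebra Cl(p,q): a ring 'a with a central
  embedding of the complex scalars, generators e^1..e^n with the Clifford relations,
  such that the blades e^A (A \<subseteq> {1..n}, with e^{} = e) form a basis.\<close>
definition is_clifford :: "nat \<Rightarrow> nat \<Rightarrow> (complex \<Rightarrow> 'a::ring_1) \<Rightarrow> (nat \<Rightarrow> 'a) \<Rightarrow> bool" where
  "is_clifford p q of_c gen \<longleftrightarrow>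
     of_c 1 = 1 \<and>
     (\<forall>x y. of_c (x + y) = of_c x + of_c y) \<and>
     (\<forall>x y. of_c (x * y) = of_c x * of_c y) \<and>
     (\<forall>x U. of_c x * U = U * of_c x) \<and>
     (\<forall>a\<in>{1..p+q}. \<forall>b\<in>{1..p+q}. gen a * gen b + gen b * gen a = of_c (2 * eta p a b)) \<and>
     (\<forall>U. \<exists>!c. (\<forall>A. \<not> A \<subseteq> {1..p+q} \<longrightarrow> c A = 0) \<and>
             U = (\<Sum>A\<in>Pow {1..p+q}. of_c (c A) * blade gen A))"

definition cl_coeff :: "nat \<Rightarrow> (complex \<Rightarrow> 'a::ring_1) \<Rightarrow> (nat \<Rightarrow> 'a) \<Rightarrow> 'a \<Rightarrow> nat set \<Rightarrow> complex" where
  "cl_coeff n of_c gen U = (THE c. (\<forall>A. \<not> A \<subseteq> {1..n} \<longrightarrow> c A = 0) \<and>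
             U = (\<Sum>A\<in>Pow {1..n}. of_c (c A) * blade gen A))"

definition grade_proj :: "nat \<Rightarrow> (complex \<Rightarrow> 'a::ring_1) \<Rightarrow> (nat \<Rightarrow> 'a) \<Rightarrow> nat \<Rightarrow> 'a \<Rightarrow> 'a" where
  "grade_proj n of_c gen k U =
     (\<Sum>A\<in>{A. A \<subseteq> {1..n} \<and> card A = k}. of_c (cl_coeff n of_c gen U A) * blade gen A)"

definition cliffF :: "nat \<Rightarrow> nat \<Rightarrow> (complex \<Rightarrow> 'a::ring_1) \<Rightarrow> (nat \<Rightarrow> 'a) \<Rightarrow> 'a \<Rightarrow> 'a" where
  "cliffF p q of_c gen U = (\<Sum>a\<in>{1..p+q}. gen a * U * (\<Sum>b\<in>{1..p+q}. of_c (eta p a b) * gen b))"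

definition lam :: "nat \<Rightarrow> nat \<Rightarrow> complex" where
  "lam n k = (-1) ^ k * of_int (int n - 2 * int k)"

definition mat_inverse_on :: "nat \<Rightarrow> (nat \<Rightarrow> nat \<Rightarrow> complex) \<Rightarrow> (nat \<Rightarrow> nat \<Rightarrow> complex) \<Rightarrow> bool" where
  "mat_inverse_on m M B \<longleftrightarrow>
     (\<forall>i<m. \<forall>j<m. (\<Sum>l<m. M i l * B l j) = (if i = j then 1 else 0)) \<and>
     (\<forall>i<m. \<forall>j<m. (\<Sum>l<m. B i l * M l j) = (if i = j then 1 else 0))"

end

theory Submission imports Defs "HOL-Computational_Algebra.Polynomial" begin


lemma poly_sum_less:
  fixes p :: "complex poly"
  assumes "degree p < m"
  shows "poly p x = (\<Sum>l<m. coeff p l * x ^ l)"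
proof -
  have "poly p x = (\<Sum>i\<le>degree p. coeff p i * x ^ i)" by (rule poly_altdef)
  also have "\<dots> = (\<Sum>l<m. coeff p l * x ^ l)"
    by (rule sum.mono_neutral_left) (use assms le_degree in auto)
  finally show ?thesis .
qed

lemma vandermonde_inv:
  fixes x :: "nat \<Rightarrow> complex"
  assumes inj: "inj_on x {..<m}"
  shows "\<exists>B. mat_inverse_on m (\<lambda>k l. x l ^ k) B"
proof -
  define P where "P k = smult (inverse (\<Prod>j\<in>{..<m}-{k}. (x k - x j)))
       (\<Prod>j\<in>{..<m}-{k}. [:- x j, 1:])" for k
  have degP: "degree (P k) < m" if "k < m" for k
  proof -
    have "degree (\<Prod>j\<in>{..<m}-{k}. [:- x j, 1:]) \<le> sum (degree \<circ> (\<lambda>j. [:- x j, 1:])) ({..<m}-{k})"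
      by (rule degree_prod_sum_le) auto
    also have "\<dots> = card ({..<m}-{k})" by simp
    also have "\<dots> < m" using that by simp
    finally show ?thesis unfolding P_def using degree_smult_le le_less_trans by blast
  qed
  have polyP: "poly (P k) (x i) = (if k = i then 1 else 0)" if "k < m" "i < m" for k i
  proof (cases "k = i")
    case True
    have "(\<Prod>j\<in>{..<m}-{k}. (x k - x j)) \<noteq> 0"
      using inj that by (auto simp: inj_on_def)
    then show ?thesis using True by (simp add: P_def poly_prod)
  next
    case False
    have "(\<Prod>j\<in>{..<m}-{k}. poly [:- x j, 1:] (x i)) = 0"
      by (rule prod_zero) (use False that in auto)
    then show ?thesis using False by (simp add: P_def poly_prod)
  qed
  define B where "B k l = coeff (P k) l" for k l
  have 1: "(\<Sum>l<m. B i l * x j ^ l) = (if i = j then 1 else 0)" if "i < m" "j < m" for i j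
    using poly_sum_less[OF degP[OF that(1)], of "x j"] polyP[OF that] by (simp add: B_def)
  have 2: "(\<Sum>l<m. x l ^ i * B l j) = (if i = j then 1 else 0)" if "i < m" "j < m" for i j
  proof -
    define Q where "Q = (\<Sum>l<m. smult (x l ^ i) (P l)) - monom 1 i"
    have dQ: "degree Q < m" unfolding Q_def
      by (intro degree_diff_less degree_sum_less) (use that degP degree_smult_le le_less_trans degree_monom_le in \<open>auto simp: degree_monom_eq\<close>)
    have roots: "x ` {..<m} \<subseteq> {y. poly Q y = 0}"
    proof
      fix y assume "y \<in> x ` {..<m}"
      then obtain j where j: "j < m" "y = x j" by auto
      have "poly (\<Sum>l<m. smult (x l ^ i) (P l)) y = (\<Sum>l<m. x l ^ i * (if l = j then 1 else 0))"
        using j polyP by (simp add: poly_sum)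
      also have "\<dots> = x j ^ i" using j by (simp add: if_distrib cong: if_cong)
      finally show "y \<in> {y. poly Q y = 0}" using j by (simp add: Q_def poly_monom)
    qed
    have "Q = 0"
    proof (rule ccontr)
      assume "Q \<noteq> 0"
      then have "card {y. poly Q y = 0} \<le> degree Q" by (rule card_poly_roots_bound)
      moreover have "card (x ` {..<m}) \<le> card {y. poly Q y = 0}"
        using roots poly_roots_finite[OF \<open>Q \<noteq> 0\<close>] by (rule card_mono[rotated])
      moreover have "card (x ` {..<m}) = m" using inj by (simp add: card_image)
      ultimately show False using dQ by simp
    qed
    then have "coeff (\<Sum>l<m. smult (x l ^ i) (P l)) j = coeff (monom 1 i) j"
      unfolding Q_def by simp
    then show ?thesis by (simp add: coeff_sum B_def)
  qed
  show ?thesis unfolding mat_inverse_on_def using 1 2 by blast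
qed


locale clf =
  fixes p q :: nat and of_c :: "complex \<Rightarrow> 'a::ring_1" and gen :: "nat \<Rightarrow> 'a"
  assumes cl: "is_clifford p q of_c gen"
begin

lemmas clp = cl[unfolded is_clifford_def]
lemma oc1: "of_c 1 = 1" by (rule clp[THEN conjunct1])
lemma oc_add: "of_c (x + y) = of_c x + of_c y" by (rule clp[THEN conjunct2, THEN conjunct1, rule_format])
lemma oc_mult: "of_c (x * y) = of_c x * of_c y" by (rule clp[THEN conjunct2, THEN conjunct2, THEN conjunct1, rule_format])
lemma oc_comm: "of_c x * U = U * of_c x" by (rule clp[THEN conjunct2, THEN conjunct2, THEN conjunct2, THEN conjunct1, rule_format])
lemma oc0: "of_c 0 = 0"
  using oc_add[of 0 0] by simp
lemma oc_neg: "of_c (- x) = - of_c x"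
proof -
  have "of_c x + of_c (-x) = 0" using oc_add[of x "-x"] oc0 by simp
  then show ?thesis by (rule minus_unique[symmetric])
qed
lemma oc_sum: "of_c (sum f S) = (\<Sum>x\<in>S. of_c (f x))"
  by (induction S rule: infinite_finite_induct) (auto simp: oc0 oc_add)

lemma half: assumes "X + X = (0::'a)" shows "X = 0"
proof -
  have "X = of_c (1/2 + 1/2) * X" by (simp add: oc1)
  also have "\<dots> = of_c (1/2) * (X + X)" by (simp only: oc_add distrib_left distrib_right)
  finally show ?thesis using assms by simp
qed

lemma gen_rel: "a \<in> {1..p+q} \<Longrightarrow> b \<in> {1..p+q} \<Longrightarrow> gen a * gen b + gen b * gen a = of_c (2 * eta p a b)"
  by (rule clp[THEN conjunct2, THEN conjunct2, THEN conjunct2, THEN conjunct2, THEN conjunct1, rule_format])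

lemma gen_sq: assumes "a \<in> {1..p+q}" shows "gen a * gen a = of_c (eta p a a)"
proof -
  have "of_c (2 * eta p a a) = of_c (eta p a a) + of_c (eta p a a)"
    by (simp only: mult_2 oc_add)
  then have h: "gen a * gen a + gen a * gen a = of_c (eta p a a) + of_c (eta p a a)"
    using gen_rel[OF assms assms] by simp
  have "(gen a * gen a - of_c (eta p a a)) + (gen a * gen a - of_c (eta p a a))
      = (gen a * gen a + gen a * gen a) - (of_c (eta p a a) + of_c (eta p a a))"
    by (simp add: algebra_simps)
  then have "(gen a * gen a - of_c (eta p a a)) + (gen a * gen a - of_c (eta p a a)) = 0"
    using h by simp
  then have "gen a * gen a - of_c (eta p a a) = 0" by (rule half)
  then show ?thesis by simp
qed

lemma gen_anti: assumes "a \<in> {1..p+q}" "b \<in> {1..p+q}" "a \<noteq> b"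
  shows "gen a * gen b = - (gen b * gen a)"
  using gen_rel[OF assms(1,2)] assms(3) by (simp add: eta_def oc0 eq_neg_iff_add_eq_0)

lemma eta_sq: "eta p a a * eta p a a = 1" by (simp add: eta_def)

lemma comm_list:
  assumes "set xs \<subseteq> {1..p+q}" "a \<in> {1..p+q}"
  shows "gen a * prod_list (map gen xs) =
     of_c ((-1) ^ length (filter (\<lambda>x. x \<noteq> a) xs)) * (prod_list (map gen xs) * gen a)"
  using assms(1)
proof (induction xs)
  case Nil
  then show ?case by (simp add: oc1)
next
  case (Cons x xs)
  define s where "s = (-1::complex) ^ length (filter (\<lambda>x. x \<noteq> a) xs)"
  define P where "P = prod_list (map gen xs)"
  have IH: "gen a * P = of_c s * (P * gen a)" using Cons by (simp add: s_def P_def)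
  show ?case
  proof (cases "x = a")
    case True
    have "gen a * (gen x * P) = gen a * (of_c s * (P * gen a))" using True IH by simp
    also have "\<dots> = (gen a * of_c s) * (P * gen a)" by (simp add: mult.assoc)
    also have "\<dots> = (of_c s * gen a) * (P * gen a)" by (simp only: oc_comm[of s "gen a"])
    also have "\<dots> = of_c s * (gen x * P * gen a)" using True by (simp only: mult.assoc)
    finally show ?thesis using True by (simp add: s_def P_def)
  next
    case False
    have x: "x \<in> {1..p+q}" using Cons by auto
    have "gen a * (gen x * P) = (gen a * gen x) * P" by (simp add: mult.assoc)
    also have "\<dots> = - (gen x * (gen a * P))" using gen_anti[OF assms(2) x] False by (simp add: mult.assoc)
    also have "\<dots> = - (gen x * of_c s * (P * gen a))" using IH by (simp add: mult.assoc)
    also have "\<dots> = - (of_c s * gen x * (P * gen a))" by (simp only: oc_comm[of s "gen x"])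
    also have "\<dots> = of_c (- s) * (gen x * P * gen a)" by (simp add: oc_neg mult.assoc)
    finally show ?thesis using False by (simp add: s_def P_def)
  qed
qed

lemma comm_blade:
  assumes "A \<subseteq> {1..p+q}" "a \<in> {1..p+q}"
  shows "gen a * blade gen A = of_c ((-1) ^ card (A - {a})) * (blade gen A * gen a)"
proof -
  have fin: "finite A" using assms(1) finite_subset by blast
  have "length (filter (\<lambda>x. x \<noteq> a) (sorted_list_of_set A)) = card (A - {a})"
    using fin by (subst distinct_length_filter) (auto intro: arg_cong[where f=card])
  then show ?thesis using comm_list[of "sorted_list_of_set A" a] assms fin
    by (simp add: blade_def)
qed

lemma inner_sum: assumes "a \<in> {1..p+q}"
  shows "(\<Sum>b\<in>{1..p+q}. of_c (eta p a b) * gen b) = of_c (eta p a a) * gen a"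
proof -
  have "(\<Sum>b\<in>{1..p+q}. of_c (eta p a b) * gen b) = (\<Sum>b\<in>{1..p+q}. if b = a then of_c (eta p a a) * gen a else 0)"
    by (rule sum.cong) (auto simp: eta_def oc0)
  then show ?thesis using assms by simp
qed

lemma sign_sum:
  assumes "A \<subseteq> {1..n}"
  shows "(\<Sum>a\<in>{1..n}. (-1::complex) ^ card (A - {a})) = lam n (card A)"
proof -
  have fin: "finite A" using assms finite_subset by blast
  define k where "k = card A"
  have kn: "k \<le> n" using card_mono[OF _ assms] k_def by simp
  have "(\<Sum>a\<in>{1..n}. (-1::complex) ^ card (A - {a})) =
        (\<Sum>a\<in>A. (-1::complex) ^ card (A - {a})) + (\<Sum>a\<in>{1..n} - A. (-1::complex) ^ card (A - {a}))"
    using assms by (simp add: sum.subset_diff)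
  also have "(\<Sum>a\<in>A. (-1::complex) ^ card (A - {a})) = (\<Sum>a\<in>A. (-1) ^ (k - 1))"
    by (rule sum.cong) (use fin in \<open>auto simp: k_def\<close>)
  also have "(\<Sum>a\<in>{1..n} - A. (-1::complex) ^ card (A - {a})) = (\<Sum>a\<in>{1..n} - A. (-1) ^ k)"
    by (rule sum.cong) (auto simp: k_def)
  also have "card ({1..n} - A) = n - k" using assms fin by (simp add: card_Diff_subset k_def)
  then have "(\<Sum>a\<in>{1..n} - A. (-1::complex) ^ k) = of_nat (n - k) * (-1) ^ k" by simp
  also have "(\<Sum>a\<in>A. (-1::complex) ^ (k - 1)) = of_nat k * (-1) ^ (k - 1)" by (simp add: k_def)
  also have "of_nat k * (-1) ^ (k - 1) + of_nat (n - k) * (-1) ^ k = lam n k"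
  proof (cases k)
    case 0 then show ?thesis by (simp add: lam_def)
  next
    case (Suc j)
    then show ?thesis using kn by (simp add: lam_def of_nat_diff algebra_simps)
  qed
  finally show ?thesis by (simp add: k_def)
qed

lemma F_blade:
  assumes A: "A \<subseteq> {1..p+q}"
  shows "cliffF p q of_c gen (blade gen A) = of_c (lam (p+q) (card A)) * blade gen A"
proof -
  have "cliffF p q of_c gen (blade gen A) =
      (\<Sum>a\<in>{1..p+q}. of_c ((-1) ^ card (A - {a})) * blade gen A)"
    unfolding cliffF_def
  proof (rule sum.cong[OF refl])
    fix a assume a: "a \<in> {1..p+q}"
    define s where "s = (-1::complex) ^ card (A - {a})"
    define e where "e = eta p a a"
    have "gen a * blade gen A * (\<Sum>b\<in>{1..p + q}. of_c (eta p a b) * gen b)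
        = gen a * blade gen A * (of_c e * gen a)" using inner_sum[OF a] by (simp add: e_def)
    also have "\<dots> = of_c e * ((gen a * blade gen A) * gen a)"
      by (metis oc_comm[of e "gen a * blade gen A"] mult.assoc)
    also have "\<dots> = of_c e * (of_c s * (blade gen A * (gen a * gen a)))"
      using comm_blade[OF A a] by (simp add: s_def mult.assoc)
    also have "\<dots> = of_c e * (of_c s * (blade gen A * of_c e))"
      using gen_sq[OF a] by (simp add: e_def)
    also have "\<dots> = of_c e * (of_c s * (of_c e * blade gen A))"
      by (simp only: oc_comm[of e "blade gen A"])
    also have "\<dots> = of_c (e * s * e) * blade gen A"
      by (simp only: oc_mult mult.assoc)
    also have "\<dots> = of_c s * blade gen A" by (simp add: e_def eta_def)
    finally show "gen a * blade gen A * (\<Sum>b\<in>{1..p + q}. of_c (eta p a b) * gen b)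
        = of_c ((-1) ^ card (A - {a})) * blade gen A" by (simp add: s_def)
  qed
  also have "\<dots> = of_c (\<Sum>a\<in>{1..p+q}. (-1) ^ card (A - {a})) * blade gen A"
    by (simp add: oc_sum sum_distrib_right)
  also have "\<dots> = of_c (lam (p+q) (card A)) * blade gen A"
    using sign_sum[OF A] by simp
  finally show ?thesis .
qed

lemma sum_sandwich: "(X::'b::semiring_0) * (\<Sum>i\<in>T. f i) * Y = (\<Sum>i\<in>T. X * f i * Y)"
  by (simp add: sum_distrib_left sum_distrib_right)

lemma oc_mid: "G * (of_c d * Y) * E = of_c d * (G * Y * E)"
  by (simp only: mult.assoc[symmetric] oc_comm[of d G])

definition Ecol where "Ecol a = (\<Sum>b\<in>{1..p+q}. of_c (eta p a b) * gen b)"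

lemma cliffF_Ecol: "cliffF p q of_c gen Y = (\<Sum>a\<in>{1..p+q}. gen a * Y * Ecol a)"
  unfolding cliffF_def Ecol_def by (rule refl)

lemma F_lin:
  "cliffF p q of_c gen (\<Sum>i\<in>T. of_c (d i) * Y i) = (\<Sum>i\<in>T. of_c (d i) * cliffF p q of_c gen (Y i))"
proof -
  have "cliffF p q of_c gen (\<Sum>i\<in>T. of_c (d i) * Y i) =
     (\<Sum>a\<in>{1..p+q}. \<Sum>i\<in>T. gen a * (of_c (d i) * Y i) * Ecol a)"
    unfolding cliffF_Ecol by (simp only: sum_sandwich)
  also have "\<dots> = (\<Sum>i\<in>T. \<Sum>a\<in>{1..p+q}. gen a * (of_c (d i) * Y i) * Ecol a)"
    by (rule sum.swap)
  also have "\<dots> = (\<Sum>i\<in>T. \<Sum>a\<in>{1..p+q}. of_c (d i) * (gen a * Y i * Ecol a))"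
    by (intro sum.cong refl) (rule oc_mid)
  also have "\<dots> = (\<Sum>i\<in>T. of_c (d i) * cliffF p q of_c gen (Y i))"
    unfolding cliffF_Ecol by (simp only: sum_distrib_left)
  finally show ?thesis .
qed

lemma expand:
  "U = (\<Sum>A\<in>Pow {1..p+q}. of_c (cl_coeff (p+q) of_c gen U A) * blade gen A)"
proof -
  have "\<exists>!c. (\<forall>A. \<not> A \<subseteq> {1..p+q} \<longrightarrow> c A = 0) \<and>
             U = (\<Sum>A\<in>Pow {1..p+q}. of_c (c A) * blade gen A)"
    by (rule clp[THEN conjunct2, THEN conjunct2, THEN conjunct2, THEN conjunct2, THEN conjunct2, rule_format])
  from theI'[OF this] show ?thesis unfolding cl_coeff_def by blast
qed

lemma F_iter:
  "(cliffF p q of_c gen ^^ l) U =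
     (\<Sum>A\<in>Pow {1..p+q}. of_c (lam (p+q) (card A) ^ l * cl_coeff (p+q) of_c gen U A) * blade gen A)"
proof (induction l)
  case 0
  have "U = (\<Sum>A\<in>Pow {1..p+q}. of_c (cl_coeff (p+q) of_c gen U A) * blade gen A)" by (rule expand)
  then show ?case by simp
next
  case (Suc l)
  let ?c = "cl_coeff (p+q) of_c gen U"
  have "(cliffF p q of_c gen ^^ Suc l) U =
     cliffF p q of_c gen (\<Sum>A\<in>Pow {1..p+q}. of_c (lam (p+q) (card A) ^ l * ?c A) * blade gen A)"
    using Suc by simp
  also have "\<dots> = (\<Sum>A\<in>Pow {1..p+q}. of_c (lam (p+q) (card A) ^ l * ?c A) * cliffF p q of_c gen (blade gen A))"
    by (rule F_lin)
  also have "\<dots> = (\<Sum>A\<in>Pow {1..p+q}. of_c (lam (p+q) (card A) ^ l * ?c A) *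
          (of_c (lam (p+q) (card A)) * blade gen A))"
    by (intro sum.cong refl) (simp add: F_blade)
  also have "\<dots> = (\<Sum>A\<in>Pow {1..p+q}. of_c (lam (p+q) (card A) ^ l * ?c A * lam (p+q) (card A)) * blade gen A)"
    by (intro sum.cong refl) (simp only: oc_mult mult.assoc)
  also have "\<dots> = (\<Sum>A\<in>Pow {1..p+q}. of_c (lam (p+q) (card A) ^ Suc l * ?c A) * blade gen A)"
    by (intro sum.cong refl) (simp add: mult.commute mult.left_commute)
  finally show ?case .
qed

lemma F_iter_grade:
  "(cliffF p q of_c gen ^^ l) U =
     (\<Sum>j\<le>p+q. of_c (lam (p+q) j ^ l) * grade_proj (p+q) of_c gen j U)"
proof -
  let ?c = "cl_coeff (p+q) of_c gen U"
  let ?h = "\<lambda>A. of_c (lam (p+q) (card A) ^ l * ?c A) * blade gen A"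
  have "(\<Sum>j\<le>p+q. of_c (lam (p+q) j ^ l) * grade_proj (p+q) of_c gen j U) =
     (\<Sum>j\<le>p+q. \<Sum>A\<in>{A\<in>Pow {1..p+q}. card A = j}. ?h A)"
    unfolding grade_proj_def
  proof (intro sum.cong refl)
    fix j
    have e: "{A. A \<subseteq> {1..p+q} \<and> card A = j} = {A\<in>Pow {1..p+q}. card A = j}" by auto
    show "of_c (lam (p+q) j ^ l) * (\<Sum>A\<in>{A. A \<subseteq> {1..p+q} \<and> card A = j}. of_c (?c A) * blade gen A)
       = (\<Sum>A\<in>{A\<in>Pow {1..p+q}. card A = j}. ?h A)"
      unfolding e sum_distrib_left
      by (intro sum.cong refl) (simp only: oc_mult mult.assoc mem_Collect_eq)
  qed
  also have "\<dots> = (\<Sum>A\<in>Pow {1..p+q}. ?h A)"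
    by (rule sum.group) (auto intro: card_mono[of "{1..p+q}", simplified])
  finally show ?thesis using F_iter by simp
qed

lemma mix:
  assumes "finite L" "finite J"
  shows "(\<Sum>l\<in>L. of_c (b l) * (\<Sum>j\<in>J. of_c (a l j) * P j)) = (\<Sum>j\<in>J. of_c (\<Sum>l\<in>L. b l * a l j) * P j)"
proof -
  have "(\<Sum>l\<in>L. of_c (b l) * (\<Sum>j\<in>J. of_c (a l j) * P j)) = (\<Sum>l\<in>L. \<Sum>j\<in>J. of_c (b l * a l j) * P j)"
    by (simp add: sum_distrib_left oc_mult mult.assoc)
  also have "\<dots> = (\<Sum>j\<in>J. \<Sum>l\<in>L. of_c (b l * a l j) * P j)" by (rule sum.swap)
  also have "\<dots> = (\<Sum>j\<in>J. of_c (\<Sum>l\<in>L. b l * a l j) * P j)"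
    by (simp add: oc_sum sum_distrib_right)
  finally show ?thesis .
qed

lemma delta_sum: assumes "k \<in> J" "finite J" shows "(\<Sum>j\<in>J. of_c (if k = j then 1 else 0) * P j) = P k"
proof -
  have "(\<Sum>j\<in>J. of_c (if k = j then 1 else 0) * P j) = (\<Sum>j\<in>J. if k = j then P j else 0)"
    by (rule sum.cong) (auto simp: oc0 oc1)
  then show ?thesis using assms by simp
qed

end


lemma lam_int: "lam n j = of_int ((-1)^j * (int n - 2*int j))" by (simp add: lam_def)

lemma lam_inj_even:
  assumes "even n" "j \<le> n" "j' \<le> n" "lam n j = lam n j'" shows "j = j'"
proof -
  have "(-1::int)^j * (int n - 2*int j) = (-1)^j' * (int n - 2*int j')"
    using assms(4) unfolding lam_int of_int_eq_iff .
  then show ?thesis using assms(1-3) unfolding minus_one_power_iff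
    by (auto split: if_splits) presburger+
qed

lemma lam_inj_odd:
  assumes "odd n" "j < (n+1) div 2" "j' < (n+1) div 2" "lam n j = lam n j'" shows "j = j'"
proof -
  have "(-1::int)^j * (int n - 2*int j) = (-1)^j' * (int n - 2*int j')"
    using assms(4) unfolding lam_int of_int_eq_iff .
  then show ?thesis using assms(1-3) unfolding minus_one_power_iff
    by (auto split: if_splits)
qed

lemma lam_sym:
  assumes "odd n" "j \<le> n" shows "lam n (n - j) = lam n j"
proof -
  have "(-1::int)^(n-j) * (int n - 2*int (n-j)) = (-1)^j * (int n - 2*int j)"
    using assms unfolding minus_one_power_iff by (auto simp: of_nat_diff)
  then show ?thesis unfolding lam_int by simp
qed

lemma split_odd:
  fixes f :: "nat \<Rightarrow> 'b::comm_monoid_add"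
  assumes "N = 2*m+1"
  shows "(\<Sum>j\<le>N. f j) = (\<Sum>j\<le>m. f j + f (N-j))"
proof -
  have "{..N} = {..m} \<union> {Suc m..N}" using assms by auto
  then have "(\<Sum>j\<le>N. f j) = (\<Sum>j\<le>m. f j) + (\<Sum>j\<in>{Suc m..N}. f j)"
    by (simp add: sum.union_disjoint)
  also have "(\<Sum>j\<in>{Suc m..N}. f j) = (\<Sum>j\<le>m. f (N-j))"
    by (rule sum.reindex_bij_witness[of _ "\<lambda>j. N - j" "\<lambda>j. N - j"]) (use assms in auto)
  finally show ?thesis by (simp add: sum.distrib)
qed

theorem theorem4:
  fixes p q :: nat and of_c :: "complex \<Rightarrow> 'a::ring_1" and gen :: "nat \<Rightarrow> 'a"
  assumes "p + q \<ge> 1"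
    and "is_clifford p q of_c gen"
  shows "(even (p + q) \<longrightarrow>
            (\<exists>B. mat_inverse_on (p + q + 1) (\<lambda>k l. lam (p + q) l ^ k) B) \<and>
            (\<forall>B. mat_inverse_on (p + q + 1) (\<lambda>k l. lam (p + q) l ^ k) B \<longrightarrow>
               (\<forall>U. \<forall>k\<le>p + q. grade_proj (p + q) of_c gen k U =
                  (\<Sum>l\<le>p + q. of_c (B k l) * (cliffF p q of_c gen ^^ l) U))))
       \<and> (odd (p + q) \<longrightarrow>
            (\<exists>G. mat_inverse_on ((p + q + 1) div 2) (\<lambda>k l. lam (p + q) l ^ k) G) \<and>
            (\<forall>G. mat_inverse_on ((p + q + 1) div 2) (\<lambda>k l. lam (p + q) l ^ k) G \<longrightarrow>
               (\<forall>U. \<forall>k\<le>(p + q - 1) div 2.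
                  grade_proj (p + q) of_c gen k U + grade_proj (p + q) of_c gen (p + q - k) U =
                  (\<Sum>l\<le>(p + q - 1) div 2. of_c (G k l) * (cliffF p q of_c gen ^^ l) U))))"
proof -
  interpret clf p q of_c gen by (rule clf.intro) (rule assms(2))
  define N where "N = p + q"
  let ?F = "cliffF p q of_c gen"
  let ?P = "\<lambda>j U. grade_proj N of_c gen j U"
  have FI: "(?F ^^ l) U = (\<Sum>j\<le>N. of_c (lam N j ^ l) * ?P j U)" for l U
    unfolding N_def by (rule F_iter_grade)
  have even_part: "(\<exists>B. mat_inverse_on (N + 1) (\<lambda>k l. lam N l ^ k) B) \<and>
            (\<forall>B. mat_inverse_on (N + 1) (\<lambda>k l. lam N l ^ k) B \<longrightarrow>
               (\<forall>U. \<forall>k\<le>N. ?P k U = (\<Sum>l\<le>N. of_c (B k l) * (?F ^^ l) U)))"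
    if ev: "even N"
  proof (intro conjI allI impI)
    show "\<exists>B. mat_inverse_on (N + 1) (\<lambda>k l. lam N l ^ k) B"
      by (rule vandermonde_inv) (auto simp: inj_on_def intro: lam_inj_even[OF ev])
  next
    fix B U k
    assume inv: "mat_inverse_on (N + 1) (\<lambda>k l. lam N l ^ k) B" and k: "k \<le> N"
    have "(\<Sum>l\<le>N. of_c (B k l) * (?F ^^ l) U) = (\<Sum>l\<le>N. of_c (B k l) * (\<Sum>j\<le>N. of_c (lam N j ^ l) * ?P j U))"
      by (simp only: FI)
    also have "\<dots> = (\<Sum>j\<le>N. of_c (\<Sum>l\<le>N. B k l * lam N j ^ l) * ?P j U)"
      by (rule mix) auto
    also have "\<dots> = (\<Sum>j\<le>N. of_c (if k = j then 1 else 0) * ?P j U)"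
    proof (intro sum.cong refl)
      fix j assume "j \<in> {..N}"
      then show "of_c (\<Sum>l\<le>N. B k l * lam N j ^ l) * ?P j U = of_c (if k = j then 1 else 0) * ?P j U"
        using inv k unfolding mat_inverse_on_def by (simp add: lessThan_Suc_atMost)
    qed
    also have "\<dots> = ?P k U" by (rule delta_sum) (use k in auto)
    finally show "?P k U = (\<Sum>l\<le>N. of_c (B k l) * (?F ^^ l) U)" by simp
  qed
  have odd_part: "(\<exists>G. mat_inverse_on ((N + 1) div 2) (\<lambda>k l. lam N l ^ k) G) \<and>
            (\<forall>G. mat_inverse_on ((N + 1) div 2) (\<lambda>k l. lam N l ^ k) G \<longrightarrow>
               (\<forall>U. \<forall>k\<le>(N - 1) div 2. ?P k U + ?P (N - k) U =
                  (\<Sum>l\<le>(N - 1) div 2. of_c (G k l) * (?F ^^ l) U)))"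
    if od: "odd N"
  proof (intro conjI allI impI)
    show "\<exists>G. mat_inverse_on ((N + 1) div 2) (\<lambda>k l. lam N l ^ k) G"
      by (rule vandermonde_inv) (auto simp: inj_on_def intro: lam_inj_odd[OF od])
  next
    fix G U k
    define m where "m = (N - 1) div 2"
    have Nm: "N = 2*m+1" using od unfolding m_def by presburger
    have m1: "(N + 1) div 2 = Suc m" using Nm by simp
    assume inv: "mat_inverse_on ((N + 1) div 2) (\<lambda>k l. lam N l ^ k) G" and k: "k \<le> (N - 1) div 2"
    have FO: "(?F ^^ l) U = (\<Sum>j\<le>m. of_c (lam N j ^ l) * (?P j U + ?P (N - j) U))" for l
    proof -
      have "(?F ^^ l) U = (\<Sum>j\<le>m. of_c (lam N j ^ l) * ?P j U + of_c (lam N (N-j) ^ l) * ?P (N-j) U)"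
        unfolding FI by (rule split_odd[OF Nm])
      also have "\<dots> = (\<Sum>j\<le>m. of_c (lam N j ^ l) * (?P j U + ?P (N - j) U))"
      proof (intro sum.cong refl)
        fix j assume "j \<in> {..m}"
        then have "lam N (N-j) = lam N j" using lam_sym[OF od, of j] Nm by simp
        then show "of_c (lam N j ^ l) * ?P j U + of_c (lam N (N-j) ^ l) * ?P (N-j) U
            = of_c (lam N j ^ l) * (?P j U + ?P (N - j) U)" by (simp add: distrib_left)
      qed
      finally show ?thesis .
    qed
    have "(\<Sum>l\<le>m. of_c (G k l) * (?F ^^ l) U) = (\<Sum>l\<le>m. of_c (G k l) * (\<Sum>j\<le>m. of_c (lam N j ^ l) * (?P j U + ?P (N - j) U)))"
      by (simp only: FO)
    also have "\<dots> = (\<Sum>j\<le>m. of_c (\<Sum>l\<le>m. G k l * lam N j ^ l) * (?P j U + ?P (N - j) U))"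
      by (rule mix) auto
    also have "\<dots> = (\<Sum>j\<le>m. of_c (if k = j then 1 else 0) * (?P j U + ?P (N - j) U))"
    proof (intro sum.cong refl)
      fix j assume "j \<in> {..m}"
      then show "of_c (\<Sum>l\<le>m. G k l * lam N j ^ l) * (?P j U + ?P (N - j) U) = of_c (if k = j then 1 else 0) * (?P j U + ?P (N - j) U)"
        using inv k unfolding mat_inverse_on_def m1 m_def[symmetric] by (simp add: lessThan_Suc_atMost)
    qed
    also have "\<dots> = ?P k U + ?P (N - k) U" by (rule delta_sum) (use k m_def in auto)
    finally show "?P k U + ?P (N - k) U = (\<Sum>l\<le>(N - 1) div 2. of_c (G k l) * (?F ^^ l) U)"
      by (simp add: m_def)
  qed
  show ?thesis using even_part odd_part unfolding N_def by blast
qed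

end
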